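(* Assume (A1). For all $\epsilon>0$ small enough there exists a constant $C_1<\infty$ such that for all $x\in\mathbb{Z}^2$ and all integers $k>\|x\|_\infty$, \[ \mathbb{P}_\epsilon\bigl(m_A(x)=k\bigr)\le\frac{C_1}{(k-\|x\|_\infty)^{\alpha-1}}. \]
   Context: Couplings $J_{x,y}=J_{x-y}$ with $J_x=J_{-x}\ge0$, $\sum_{x\in\mathbb{Z}^2}J_x=1$; (A1): there exist $\alpha>4$, $J\ge0$ with $J_x\le J\|x\|_1^{-\alpha}$ for $x\ne0$. For $\epsilon\in(0,1]$, $\mathbb{P}_\epsilon$ is independent Bernoulli bond percolation on the set of unordered pairs $\{x,y\}$ of distinct vertices of $\mathbb{Z}^2$, each open with probability $\epsilon J_{x,y}$; $A$ is the set of open edges and $u\leftrightarrow v$ means $u,v$ are joined by a finite chain of open edges (or $u=v$). $m_A(u)=\sup\{\|v\|_\infty: v\leftrightarrow u\}$. *)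

theory Defs
  imports "HOL-Probability.Probability"
begin

type_synonym vertex = "int \<times> int"
type_synonym edge = "vertex set"

definition linf :: "vertex \<Rightarrow> int" where
  "linf v = max \<bar>fst v\<bar> \<bar>snd v\<bar>"

definition l1 :: "vertex \<Rightarrow> int" where
  "l1 v = \<bar>fst v\<bar> + \<bar>snd v\<bar>"

definition edges :: "edge set" where
  "edges = {{x, y} | x y. x \<noteq> y}"

text \<open>Coupling of an edge {x,y}: J_{x,y} = J(x - y) (well defined by symmetry of J).\<close>
definition edgeJ :: "(vertex \<Rightarrow> real) \<Rightarrow> edge \<Rightarrow> real" where
  "edgeJ J e = (THE r. \<exists>x y. e = {x, y} \<and> x \<noteq> y \<and> r = J (x - y))"

definition perc :: "(vertex \<Rightarrow> real) \<Rightarrow> real \<Rightarrow> (edge \<Rightarrow> bool) measure" where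
  "perc J \<epsilon> = PiM edges (\<lambda>e. measure_pmf (bernoulli_pmf (\<epsilon> * edgeJ J e)))"

definition connected_in :: "(edge \<Rightarrow> bool) \<Rightarrow> vertex \<Rightarrow> vertex \<Rightarrow> bool" where
  "connected_in A u v \<longleftrightarrow>
     (u, v) \<in> {(a, b). {a, b} \<in> edges \<and> A {a, b}}\<^sup>*"

definition mA :: "(edge \<Rightarrow> bool) \<Rightarrow> vertex \<Rightarrow> enat" where
  "mA A u = Sup ((\<lambda>v. enat (nat (linf v))) ` {v. connected_in A v u})"

end

theory Submission
  imports Defs "HOL-Library.Transitive_Closure_Table"
begin


definition isum :: "('a \<Rightarrow> ennreal) \<Rightarrow> ennreal" where
  "isum f = (\<integral>\<^sup>+z. f z \<partial>count_space UNIV)"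

lemma isum_mono: "(\<And>z. f z \<le> g z) \<Longrightarrow> isum f \<le> isum g"
  unfolding isum_def by (intro nn_integral_mono) auto

lemma isum_cmult: "isum (\<lambda>z. c * f z) = c * isum f"
  unfolding isum_def by (rule nn_integral_cmult) auto

lemma isum_cmult_right: "isum (\<lambda>z. f z * c) = isum f * c"
  using isum_cmult[of c f] by (simp add: mult.commute)

lemma isum_add: "isum (\<lambda>z. f z + g z) = isum f + isum g"
  unfolding isum_def by (rule nn_integral_add) auto

lemma isum_ge: "f j \<le> isum f"
proof -
  have "isum (\<lambda>z. f j * indicator {j} z) \<le> isum f"
    by (intro isum_mono) (auto split: split_indicator)
  moreover have "isum (\<lambda>z. f j * indicator {j} z) = f j"
    unfolding isum_def by (simp add: nn_integral_cmult_indicator)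
  ultimately show ?thesis by simp
qed

lemma isum_swap:
  fixes f :: "'a::countable \<Rightarrow> 'b::countable \<Rightarrow> ennreal"
  shows "isum (\<lambda>x. isum (\<lambda>y. f x y)) = isum (\<lambda>y. isum (\<lambda>x. f x y))"
  unfolding isum_def
  by (rule nn_integral_count_space_nn_integral) auto

lemma isum_bij:
  assumes "bij g" shows "isum (\<lambda>x. f (g x)) = isum f"
  unfolding isum_def using nn_integral_bij_count_space[OF assms] by simp

lemma isum_shift:
  fixes f :: "'a::ab_group_add \<Rightarrow> ennreal"
  shows "isum (\<lambda>z. f (z + a)) = isum f"
  by (rule isum_bij) (metis bij_plus_right)

lemma isum_refl:
  fixes f :: "'a::ab_group_add \<Rightarrow> ennreal"
  shows "isum (\<lambda>z. f (a - z)) = isum f"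
proof -
  have "bij (\<lambda>z::'a. a - z)"
    by (rule bij_betwI[where g="\<lambda>z. a - z"]) auto
  then show ?thesis by (rule isum_bij)
qed

lemma isum_pair:
  fixes f :: "'a::countable \<times> 'b::countable \<Rightarrow> ennreal"
  shows "isum f = isum (\<lambda>a. isum (\<lambda>b. f (a, b)))"
  unfolding isum_def by (rule nn_integral_fst_count_space[symmetric])

lemma isum_single: "(\<And>z. z \<noteq> j \<Longrightarrow> f z = 0) \<Longrightarrow> isum f = f j"
  unfolding isum_def by (subst nn_integral_count_space'[where A="{j}"]) auto

lemma isum_suminf: "isum (\<lambda>z. \<Sum>n. f n z) = (\<Sum>n. isum (f n))"
  unfolding isum_def by (rule nn_integral_suminf) auto

lemma J_isum:
  fixes J :: "int \<times> int \<Rightarrow> real"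
  assumes "\<And>x. J x \<ge> 0" "(J has_sum 1) UNIV"
  shows "isum (\<lambda>z. ennreal (J z)) = 1"
proof -
  have "J summable_on UNIV" using assms(2) by (rule has_sum_imp_summable)
  then have "Infinite_Sum.abs_summable_on J UNIV"
    using summable_on_iff_abs_summable_on_real by blast
  then have a: "Infinite_Set_Sum.abs_summable_on J UNIV" using abs_summable_equivalent by blast
  have "isum (\<lambda>z. ennreal (J z)) = ennreal (infsetsum J UNIV)"
    unfolding isum_def by (rule nn_integral_conv_infsetsum[OF a]) (use assms in auto)
  also have "infsetsum J UNIV = infsum J UNIV" by (rule infsetsum_infsum[OF a])
  also have "\<dots> = 1" using assms(2) by (rule infsumI)
  finally show ?thesis by simp
qed

lemma J_le1:
  fixes J :: "int \<times> int \<Rightarrow> real"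
  assumes "\<And>x. J x \<ge> 0" "(J has_sum 1) UNIV"
  shows "J z \<le> 1"
proof -
  have "ennreal (J z) \<le> 1" using isum_ge[of "\<lambda>z. ennreal (J z)" z] J_isum[OF assms] by simp
  then show ?thesis by (simp add: ennreal_le_1)
qed



definition br :: "int \<times> int \<Rightarrow> real" where
  "br z = max 1 (real_of_int (l1 z))"

definition wt :: "(int \<times> int \<Rightarrow> real) \<Rightarrow> real \<Rightarrow> int \<times> int \<Rightarrow> ennreal" where
  "wt J \<epsilon> z = (if z = 0 then 0 else ennreal (\<epsilon> * J z))"

fun Kp :: "(int \<times> int \<Rightarrow> real) \<Rightarrow> real \<Rightarrow> nat \<Rightarrow> int \<times> int \<Rightarrow> ennreal" where
  "Kp J \<epsilon> 0 z = (if z = 0 then 1 else 0)"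
| "Kp J \<epsilon> (Suc n) z = isum (\<lambda>u. wt J \<epsilon> u * Kp J \<epsilon> n (z - u))"

lemma br_pos: "br z \<ge> 1" unfolding br_def by simp

lemma l1_triangle: "l1 z \<le> l1 u + l1 (z - u)"
  unfolding l1_def by (cases z; cases u) auto

lemma br_triangle: "br z \<le> 2 * max (br u) (br (z - u))"
  using l1_triangle[of z u] unfolding br_def by auto

lemma br_powr_half:
  assumes a: "\<alpha> \<ge> 0" and h: "br z \<le> 2 * br u"
  shows "br u powr (-\<alpha>) \<le> 2 powr \<alpha> * br z powr (-\<alpha>)"
proof -
  have pz: "br z > 0" "br u > 0" using br_pos[of z] br_pos[of u] by auto
  have "br u powr (-\<alpha>) \<le> (br z / 2) powr (-\<alpha>)"
    using pz h a by (intro powr_mono2') auto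
  also have "\<dots> = 2 powr \<alpha> * br z powr (-\<alpha>)"
    using pz by (simp add: powr_divide powr_minus divide_simps)
  finally show ?thesis .
qed

lemma wt_isum:
  assumes "\<And>x. J x \<ge> 0" "(J has_sum 1) UNIV" "\<epsilon> \<ge> 0"
  shows "isum (wt J \<epsilon>) \<le> ennreal \<epsilon>"
proof -
  have "isum (wt J \<epsilon>) \<le> isum (\<lambda>z. ennreal \<epsilon> * ennreal (J z))"
    using assms by (intro isum_mono) (auto simp: wt_def ennreal_mult)
  also have "\<dots> = ennreal \<epsilon>" by (simp add: isum_cmult J_isum[OF assms(1,2)])
  finally show ?thesis .
qed

lemma Kp_isum:
  assumes "\<And>x. J x \<ge> 0" "(J has_sum 1) UNIV" "\<epsilon> \<ge> 0"
  shows "isum (Kp J \<epsilon> n) \<le> ennreal (\<epsilon> ^ n)"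
proof (induction n)
  case 0
  have "isum (Kp J \<epsilon> 0) = Kp J \<epsilon> 0 0" by (rule isum_single) auto
  then show ?case by (simp del: Kp.simps) simp
next
  case (Suc n)
  have "isum (Kp J \<epsilon> (Suc n)) = isum (\<lambda>z. isum (\<lambda>u. wt J \<epsilon> u * Kp J \<epsilon> n (z - u)))"
    by (rule arg_cong[where f=isum]) (simp add: fun_eq_iff)
  also have "\<dots> = isum (\<lambda>u. isum (\<lambda>z. wt J \<epsilon> u * Kp J \<epsilon> n (z - u)))"
    by (rule isum_swap)
  also have "\<dots> = isum (\<lambda>u. wt J \<epsilon> u * isum (Kp J \<epsilon> n))"
  proof -
    have "isum (\<lambda>z. Kp J \<epsilon> n (z - u)) = isum (Kp J \<epsilon> n)" for u
      using isum_shift[of "Kp J \<epsilon> n" "-u"] by simp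
    then show ?thesis by (simp add: isum_cmult)
  qed
  also have "\<dots> = isum (wt J \<epsilon>) * isum (Kp J \<epsilon> n)" by (rule isum_cmult_right)
  also have "\<dots> \<le> ennreal \<epsilon> * ennreal (\<epsilon> ^ n)"
    by (intro mult_mono Suc wt_isum assms) auto
  also have "\<dots> = ennreal (\<epsilon> ^ Suc n)" using assms(3) by (simp add: ennreal_mult[symmetric])
  finally show ?case .
qed

lemma conv_bound:
  fixes f g :: "int \<times> int \<Rightarrow> ennreal"
  assumes al: "\<alpha> \<ge> 0" and ab: "a \<ge> 0" "b \<ge> 0"
    and f: "\<And>z. f z \<le> ennreal (a * br z powr (-\<alpha>))"
    and g: "\<And>z. g z \<le> ennreal (b * br z powr (-\<alpha>))"
  shows "isum (\<lambda>u. f u * g (z - u)) \<le>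
     ennreal (2 powr \<alpha> * br z powr (-\<alpha>)) * (ennreal a * isum g + ennreal b * isum f)"
proof -
  let ?c = "2 powr \<alpha> * br z powr (-\<alpha>)"
  have c0: "?c \<ge> 0" by simp
  have pt: "f u * g (z - u) \<le> ennreal (a * ?c) * g (z - u) + ennreal (b * ?c) * f u" for u
  proof (cases "br z \<le> 2 * br u")
    case True
    have "f u \<le> ennreal (a * br u powr (-\<alpha>))" by (rule f)
    also have "\<dots> \<le> ennreal (a * ?c)"
      using br_powr_half[OF al True] ab by (intro ennreal_leI mult_left_mono) auto
    finally have "f u * g (z - u) \<le> ennreal (a * ?c) * g (z - u)" by (rule mult_right_mono) auto
    then show ?thesis by (meson add_increasing2 zero_le order_trans)
  next
    case False
    then have h: "br z \<le> 2 * br (z - u)" using br_triangle[of z u] by auto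
    have "g (z - u) \<le> ennreal (b * br (z - u) powr (-\<alpha>))" by (rule g)
    also have "\<dots> \<le> ennreal (b * ?c)"
      using br_powr_half[OF al h] ab by (intro ennreal_leI mult_left_mono) auto
    finally have "f u * g (z - u) \<le> ennreal (b * ?c) * f u"
      by (subst mult.commute) (rule mult_right_mono, auto)
    then show ?thesis by (meson add_increasing zero_le order_trans)
  qed
  have "isum (\<lambda>u. f u * g (z - u)) \<le> isum (\<lambda>u. ennreal (a * ?c) * g (z - u) + ennreal (b * ?c) * f u)"
    by (intro isum_mono pt)
  also have "\<dots> = ennreal (a * ?c) * isum g + ennreal (b * ?c) * isum f"
    by (simp add: isum_add isum_cmult isum_refl[of g z])
  also have "\<dots> = ennreal ?c * (ennreal a * isum g + ennreal b * isum f)"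
    using ab c0 by (simp add: ennreal_mult distrib_left mult.assoc mult.left_commute)
  finally show ?thesis .
qed



lemma l1_pos: "z \<noteq> 0 \<Longrightarrow> l1 z \<ge> 1"
  unfolding l1_def by (cases z) (auto simp: zero_prod_def)

lemma wt_bound:
  assumes "\<epsilon> \<ge> 0" "\<And>x. x \<noteq> 0 \<Longrightarrow> J x \<le> Jc * real_of_int (l1 x) powr (- \<alpha>)"
  shows "wt J \<epsilon> z \<le> ennreal (\<epsilon> * Jc * br z powr (-\<alpha>))"
proof (cases "z = 0")
  case True then show ?thesis by (simp add: wt_def)
next
  case False
  then have "br z = real_of_int (l1 z)" using l1_pos[of z] by (simp add: br_def)
  then have "\<epsilon> * J z \<le> \<epsilon> * Jc * br z powr (-\<alpha>)"
    using assms(2)[OF False] assms(1) by (simp add: mult_left_mono mult.assoc)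
  then show ?thesis using False by (simp add: wt_def ennreal_leI)
qed

lemma Kp_bound:
  assumes J0: "\<And>x. J x \<ge> 0" and Js: "(J has_sum 1) UNIV" and e: "\<epsilon> \<ge> 0"
    and al: "\<alpha> \<ge> 0" and Jc: "Jc \<ge> 0"
    and A1: "\<And>x. x \<noteq> 0 \<Longrightarrow> J x \<le> Jc * real_of_int (l1 x) powr (- \<alpha>)"
  shows "Kp J \<epsilon> (Suc n) z \<le> ennreal (Jc * real (Suc n) * (2 powr \<alpha> * \<epsilon>) ^ Suc n * br z powr (-\<alpha>))"
proof (induction n arbitrary: z)
  case 0
  have "Kp J \<epsilon> (Suc 0) z = wt J \<epsilon> z"
    by (simp, subst isum_single[where j=z]) auto
  also have "\<dots> \<le> ennreal (\<epsilon> * Jc * br z powr (-\<alpha>))" by (rule wt_bound[OF e A1])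
  also have "\<dots> \<le> ennreal (Jc * real (Suc 0) * (2 powr \<alpha> * \<epsilon>) ^ Suc 0 * br z powr (-\<alpha>))"
  proof (intro ennreal_leI)
    have "1 \<le> (2::real) powr \<alpha>" using al by (intro ge_one_powr_ge_zero) auto
    then have "\<epsilon> * Jc * 1 \<le> \<epsilon> * Jc * 2 powr \<alpha>" using e Jc by (intro mult_left_mono) auto
    then have "\<epsilon> * Jc \<le> Jc * (2 powr \<alpha> * \<epsilon>)" by (simp add: mult_ac)
    then show "\<epsilon> * Jc * br z powr - \<alpha> \<le> Jc * real (Suc 0) * (2 powr \<alpha> * \<epsilon>) ^ Suc 0 * br z powr - \<alpha>"
      by (simp add: mult_right_mono)
  qed
  finally show ?case .
next
  case (Suc n)
  let ?q = "2 powr \<alpha> * \<epsilon>"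
  let ?b = "Jc * real (Suc n) * ?q ^ Suc n"
  have q0: "?q \<ge> 0" using e by simp
  have b0: "?b \<ge> 0" using Jc q0 by simp
  have h1: "\<And>z. wt J \<epsilon> z \<le> ennreal ((\<epsilon> * Jc) * br z powr (-\<alpha>))"
    using wt_bound[OF e A1] by simp
  have a0: "\<epsilon> * Jc \<ge> 0" using e Jc by simp
  have k1: "isum (Kp J \<epsilon> (Suc n)) \<le> ennreal (\<epsilon> ^ Suc n)" by (rule Kp_isum[OF J0 Js e])
  have k2: "isum (wt J \<epsilon>) \<le> ennreal \<epsilon>" by (rule wt_isum[OF J0 Js e])
  have "Kp J \<epsilon> (Suc (Suc n)) z = isum (\<lambda>u. wt J \<epsilon> u * Kp J \<epsilon> (Suc n) (z - u))" by simp
  also have "\<dots> \<le> ennreal (2 powr \<alpha> * br z powr (-\<alpha>)) *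
       (ennreal (\<epsilon> * Jc) * isum (Kp J \<epsilon> (Suc n)) + ennreal ?b * isum (wt J \<epsilon>))"
    by (rule conv_bound[OF al a0 b0 h1 Suc.IH])
  also have "\<dots> \<le> ennreal (2 powr \<alpha> * br z powr (-\<alpha>)) *
       (ennreal (\<epsilon> * Jc) * ennreal (\<epsilon> ^ Suc n) + ennreal ?b * ennreal \<epsilon>)"
    by (rule mult_left_mono[OF add_mono[OF mult_left_mono[OF k1] mult_left_mono[OF k2]]]) auto
  also have "\<dots> = ennreal (2 powr \<alpha> * br z powr (-\<alpha>) * (\<epsilon> * Jc * \<epsilon> ^ Suc n + ?b * \<epsilon>))"
  proof -
    have n1: "\<epsilon> * Jc * \<epsilon> ^ Suc n \<ge> 0" "?b * \<epsilon> \<ge> 0" "\<epsilon> ^ Suc n \<ge> 0"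
      "2 powr \<alpha> * br z powr (-\<alpha>) \<ge> 0" using a0 b0 e by auto
    have "ennreal (2 powr \<alpha> * br z powr (-\<alpha>) * (\<epsilon> * Jc * \<epsilon> ^ Suc n + ?b * \<epsilon>))
       = ennreal (2 powr \<alpha> * br z powr (-\<alpha>)) * (ennreal (\<epsilon> * Jc * \<epsilon> ^ Suc n) + ennreal (?b * \<epsilon>))"
      using n1 by (simp add: ennreal_mult ennreal_plus del: ennreal_plus_if)
    also have "ennreal (\<epsilon> * Jc * \<epsilon> ^ Suc n) = ennreal (\<epsilon> * Jc) * ennreal (\<epsilon> ^ Suc n)"
      using a0 n1(3) by (rule ennreal_mult)
    also have "ennreal (?b * \<epsilon>) = ennreal ?b * ennreal \<epsilon>"
      using b0 e by (rule ennreal_mult)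
    finally show ?thesis by simp
  qed
  also have "\<dots> \<le> ennreal (Jc * real (Suc (Suc n)) * ?q ^ Suc (Suc n) * br z powr (-\<alpha>))"
  proof (intro ennreal_leI)
    have p1: "1 \<le> (2::real) powr \<alpha>" using al by (intro ge_one_powr_ge_zero) auto
    have "2 powr \<alpha> * \<epsilon> ^ Suc (Suc n) \<le> (2 powr \<alpha>) ^ Suc (Suc n) * \<epsilon> ^ Suc (Suc n)"
    proof (intro mult_right_mono)
      have "(2 powr \<alpha>) ^ 1 \<le> (2 powr \<alpha>) ^ Suc (Suc n)"
        using p1 by (intro power_increasing) auto
      then show "2 powr \<alpha> \<le> (2 powr \<alpha>) ^ Suc (Suc n)" by simp
    qed (use e in auto)
    then have k: "2 powr \<alpha> * \<epsilon> ^ Suc (Suc n) \<le> ?q ^ Suc (Suc n)"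
      by (simp only: power_mult_distrib)
    have "2 powr \<alpha> * (\<epsilon> * Jc * \<epsilon> ^ Suc n + ?b * \<epsilon>)
        = Jc * (2 powr \<alpha> * \<epsilon> ^ Suc (Suc n)) + Jc * real (Suc n) * ?q ^ Suc (Suc n)"
      by (simp add: algebra_simps power_mult_distrib)
    also have "\<dots> \<le> Jc * ?q ^ Suc (Suc n) + Jc * real (Suc n) * ?q ^ Suc (Suc n)"
      using k Jc by (intro add_mono mult_left_mono) auto
    also have "\<dots> = Jc * real (Suc (Suc n)) * ?q ^ Suc (Suc n)" by (simp add: algebra_simps)
    finally have "2 powr \<alpha> * (\<epsilon> * Jc * \<epsilon> ^ Suc n + ?b * \<epsilon>) \<le> Jc * real (Suc (Suc n)) * ?q ^ Suc (Suc n)" .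
    then have "2 powr \<alpha> * (\<epsilon> * Jc * \<epsilon> ^ Suc n + ?b * \<epsilon>) * br z powr (-\<alpha>)
        \<le> Jc * real (Suc (Suc n)) * ?q ^ Suc (Suc n) * br z powr (-\<alpha>)"
      by (rule mult_right_mono) simp
    then show "2 powr \<alpha> * br z powr (-\<alpha>) * (\<epsilon> * Jc * \<epsilon> ^ Suc n + ?b * \<epsilon>)
        \<le> Jc * real (Suc (Suc n)) * ?q ^ Suc (Suc n) * br z powr (-\<alpha>)"
      by (simp add: algebra_simps)
  qed
  finally show ?case .
qed



fun Es :: "int \<times> int \<Rightarrow> (int \<times> int) list \<Rightarrow> (int \<times> int) set set" where
  "Es x [] = {}"
| "Es x (y # ys) = insert {x, y} (Es y ys)"

fun Wt :: "(int \<times> int \<Rightarrow> real) \<Rightarrow> real \<Rightarrow> int \<times> int \<Rightarrow> (int \<times> int) list \<Rightarrow> ennreal" where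
  "Wt J \<epsilon> x [] = 1"
| "Wt J \<epsilon> x (y # ys) = wt J \<epsilon> (y - x) * Wt J \<epsilon> y ys"

definition Mi :: "(int \<times> int \<Rightarrow> real) \<Rightarrow> real \<Rightarrow> (int \<times> int) set \<Rightarrow> bool measure" where
  "Mi J \<epsilon> e = measure_pmf (bernoulli_pmf (\<epsilon> * edgeJ J e))"

definition Op :: "(int \<times> int \<Rightarrow> real) \<Rightarrow> real \<Rightarrow> int \<times> int \<Rightarrow> (int \<times> int) list \<Rightarrow> ((int \<times> int) set \<Rightarrow> bool) set" where
  "Op J \<epsilon> x xs = prod_emb edges (Mi J \<epsilon>) (Es x xs) (\<Pi>\<^sub>E e\<in>Es x xs. {True})"

lemma perc_Mi: "perc J \<epsilon> = PiM edges (Mi J \<epsilon>)"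
  unfolding perc_def Mi_def by simp

lemma Es_subset: "e \<in> Es x xs \<Longrightarrow> e \<subseteq> set (x # xs)"
  by (induction x xs rule: Es.induct) auto

lemma Es_finite: "finite (Es x xs)"
  by (induction x xs rule: Es.induct) auto

lemma Es_edges: "distinct (x # xs) \<Longrightarrow> Es x xs \<subseteq> edges"
  by (induction x xs rule: Es.induct) (auto simp: edges_def)

lemma edgeJ_eq:
  assumes sym: "\<And>x. J x = J (- x)" and ab: "a \<noteq> b"
  shows "edgeJ J {a, b} = J (a - b)"
  unfolding edgeJ_def
proof (rule the_equality)
  show "\<exists>x y. {a, b} = {x, y} \<and> x \<noteq> y \<and> J (a - b) = J (x - y)" using ab by blast
next
  fix r assume "\<exists>x y. {a, b} = {x, y} \<and> x \<noteq> y \<and> r = J (x - y)"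
  then obtain x y where h: "{a, b} = {x, y}" "x \<noteq> y" "r = J (x - y)" by blast
  then have "(x = a \<and> y = b) \<or> (x = b \<and> y = a)" by (metis doubleton_eq_iff)
  then show "r = J (a - b)"
    using h sym[of "a - b"] by (auto simp: minus_diff_eq)
qed

lemma Op_sets: "distinct (x # xs) \<Longrightarrow> Op J \<epsilon> x xs \<in> sets (perc J \<epsilon>)"
  unfolding Op_def perc_Mi
  by (rule sets_PiM_I) (auto simp: Es_finite Es_edges Mi_def)

lemma Op_emeasure:
  assumes sym: "\<And>x. J x = J (- x)" and J0: "\<And>x. J x \<ge> 0" and Js: "(J has_sum 1) UNIV"
    and e: "0 \<le> \<epsilon>" "\<epsilon> \<le> 1" and d: "distinct (x # xs)"
  shows "emeasure (perc J \<epsilon>) (Op J \<epsilon> x xs) = Wt J \<epsilon> x xs"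
proof -
  have "emeasure (perc J \<epsilon>) (Op J \<epsilon> x xs) = (\<Prod>i\<in>Es x xs. emeasure (Mi J \<epsilon> i) {True})"
    unfolding Op_def perc_Mi
    by (rule emeasure_PiM_emb) (auto simp: Es_finite Es_edges[OF d] Mi_def prob_space_measure_pmf)
  also have "\<dots> = Wt J \<epsilon> x xs"
    using d
  proof (induction x xs rule: Es.induct)
    case (1 x) then show ?case by simp
  next
    case (2 x y ys)
    have xy: "x \<noteq> y" using 2(2) by auto
    have nin: "{x, y} \<notin> Es y ys" using 2(2) Es_subset[of "{x,y}" y ys] by auto
    have p: "0 \<le> \<epsilon> * J (x - y)" "\<epsilon> * J (x - y) \<le> 1"
      using J0[of "x - y"] J_le1[OF J0 Js, of "x - y"] e by (auto intro: mult_le_one)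
    have "emeasure (Mi J \<epsilon> {x, y}) {True} = ennreal (\<epsilon> * J (x - y))"
      unfolding Mi_def using p by (simp add: emeasure_pmf_single edgeJ_eq[of J, OF sym xy])
    also have "\<dots> = wt J \<epsilon> (y - x)"
      using xy sym[of "x - y"] by (simp add: wt_def minus_diff_eq)
    finally show ?case
      using 2 nin by (simp add: Es_finite)
  qed
  finally show ?thesis .
qed

lemma Op_mem:
  assumes "A \<in> space (perc J \<epsilon>)" "\<forall>e\<in>Es x xs. A e"
  shows "A \<in> Op J \<epsilon> x xs"
  using assms unfolding Op_def perc_Mi
  by (auto simp: prod_emb_iff space_PiM PiE_iff Mi_def)

lemma path_props:
  assumes "rtrancl_path (\<lambda>a b. {a, b} \<in> edges \<and> A {a, b}) x xs y"
  shows "last (x # xs) = y \<and> (\<forall>e\<in>Es x xs. A e)"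
  using assms by induction auto

lemma conn_path:
  assumes "connected_in A v x"
  shows "\<exists>xs. distinct (v # xs) \<and> last (v # xs) = x \<and> (\<forall>e\<in>Es v xs. A e)"
proof -
  let ?r = "\<lambda>a b. {a, b} \<in> edges \<and> A {a, b}"
  have "?r\<^sup>*\<^sup>* v x" using assms unfolding connected_in_def
    by (simp add: rtranclp_rtrancl_eq)
  then obtain xs where "rtrancl_path ?r v xs x" by (auto simp: rtranclp_eq_rtrancl_path)
  then obtain xs' where "rtrancl_path ?r v xs' x" "distinct (v # xs')"
    by (rule rtrancl_path_distinct)
  then show ?thesis using path_props by blast
qed



definition WS :: "(int \<times> int \<Rightarrow> real) \<Rightarrow> real \<Rightarrow> nat \<Rightarrow> int \<times> int \<Rightarrow> int \<times> int \<Rightarrow> ennreal" where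
  "WS J \<epsilon> n v x = isum (\<lambda>xs. if length xs = n \<and> last (v # xs) = x then Wt J \<epsilon> v xs else 0)"

lemma isum_list_cons:
  fixes F :: "'a::countable list \<Rightarrow> ennreal"
  assumes "F [] = 0"
  shows "isum F = isum (\<lambda>y. isum (\<lambda>ys. F (y # ys)))"
proof -
  have b: "bij_betw (\<lambda>p. fst p # snd p) (UNIV :: ('a \<times> 'a list) set) (UNIV - {[]})"
    by (rule bij_betwI[where g="\<lambda>xs. (hd xs, tl xs)"]) auto
  have "isum (\<lambda>p. F (fst p # snd p)) = (\<integral>\<^sup>+xs. F xs \<partial>count_space (UNIV - {[]}))"
    unfolding isum_def by (rule nn_integral_bij_count_space[OF b])
  also have "\<dots> = isum F"
    unfolding isum_def using assms
    by (subst nn_integral_count_space_indicator) (auto intro!: nn_integral_cong split: split_indicator)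
  finally have "isum F = isum (\<lambda>p. F (fst p # snd p))" by simp
  also have "\<dots> = isum (\<lambda>y. isum (\<lambda>ys. F (y # ys)))" by (subst isum_pair) simp
  finally show ?thesis .
qed

lemma WS_Kp: "WS J \<epsilon> n v x = Kp J \<epsilon> n (x - v)"
proof (induction n arbitrary: v)
  case 0
  have "WS J \<epsilon> 0 v x = (if v = x then 1 else 0)"
    unfolding WS_def by (subst isum_single[where j="[]"]) auto
  then show ?case by auto
next
  case (Suc n)
  have "WS J \<epsilon> (Suc n) v x = isum (\<lambda>y. isum (\<lambda>ys.
      if length (y # ys) = Suc n \<and> last (v # y # ys) = x then Wt J \<epsilon> v (y # ys) else 0))"
    unfolding WS_def by (rule isum_list_cons) simp
  also have "\<dots> = isum (\<lambda>y. wt J \<epsilon> (y - v) * WS J \<epsilon> n y x)"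
    unfolding WS_def
    by (rule arg_cong[where f=isum], rule ext, subst isum_cmult[symmetric])
       (rule arg_cong[where f=isum], auto)
  also have "\<dots> = isum (\<lambda>y. wt J \<epsilon> (y - v) * Kp J \<epsilon> n (x - y))" by (simp add: Suc.IH)
  also have "\<dots> = isum (\<lambda>u. wt J \<epsilon> ((u + v) - v) * Kp J \<epsilon> n (x - (u + v)))"
    by (rule isum_shift[symmetric, where f="\<lambda>y. wt J \<epsilon> (y - v) * Kp J \<epsilon> n (x - y)"])
  also have "\<dots> = Kp J \<epsilon> (Suc n) (x - v)" by (simp add: algebra_simps)
  finally show ?case .
qed

lemma walks_sum: "isum (\<lambda>xs. if last (v # xs) = x then Wt J \<epsilon> v xs else 0) = (\<Sum>n. Kp J \<epsilon> n (x - v))"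
proof -
  have "isum (\<lambda>xs. if last (v # xs) = x then Wt J \<epsilon> v xs else 0)
      = isum (\<lambda>xs. \<Sum>n. if length xs = n \<and> last (v # xs) = x then Wt J \<epsilon> v xs else 0)"
  proof (rule arg_cong[where f=isum], rule ext)
    fix xs :: "(int \<times> int) list"
    let ?c = "if last (v # xs) = x then Wt J \<epsilon> v xs else 0"
    have e: "(\<lambda>n. if length xs = n \<and> last (v # xs) = x then Wt J \<epsilon> v xs else 0)
        = (\<lambda>n. if n = length xs then (\<lambda>_. ?c) n else 0)" by auto
    show "?c = (\<Sum>n. if length xs = n \<and> last (v # xs) = x then Wt J \<epsilon> v xs else 0)"
      unfolding e using sums_single[of "length xs" "\<lambda>_. ?c"] by (simp add: sums_iff)
  qed
  also have "\<dots> = (\<Sum>n. WS J \<epsilon> n v x)" unfolding WS_def by (rule isum_suminf)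
  finally show ?thesis by (simp add: WS_Kp)
qed



lemma nat_le_pow2: "real m \<le> 2 ^ m"
proof -
  have "m \<le> 2 ^ m" using less_exp[of m] by simp
  then have "real m \<le> real (2 ^ m)" by (rule of_nat_mono)
  then show ?thesis by simp
qed

lemma mq_bound:
  assumes "0 \<le> q" "q \<le> 1/4"
  shows "real m * q ^ m \<le> (1/2) ^ m"
proof -
  have "real m * q ^ m \<le> 2 ^ m * (1/4) ^ m"
    using assms nat_le_pow2[of m] by (intro mult_mono power_mono) auto
  also have "\<dots> = (1/2) ^ m" by (simp add: power_mult_distrib[symmetric])
  finally show ?thesis .
qed

lemma Kp_sum_bound:
  assumes J0: "\<And>x. J x \<ge> 0" and Js: "(J has_sum 1) UNIV" and e: "\<epsilon> \<ge> 0"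
    and q: "2 powr \<alpha> * \<epsilon> \<le> 1/4"
    and al: "\<alpha> \<ge> 0" and Jc: "Jc \<ge> 0"
    and A1: "\<And>x. x \<noteq> 0 \<Longrightarrow> J x \<le> Jc * real_of_int (l1 x) powr (- \<alpha>)"
    and z: "z \<noteq> 0"
  shows "(\<Sum>n. Kp J \<epsilon> n z) \<le> ennreal (Jc * br z powr (-\<alpha>))"
proof -
  let ?c = "Jc * br z powr (-\<alpha>)"
  have c0: "?c \<ge> 0" using Jc by simp
  have "(\<Sum>n. Kp J \<epsilon> n z) = (\<Sum>j. Kp J \<epsilon> (j + 1) z) + (\<Sum>j<1. Kp J \<epsilon> j z)"
    by (rule suminf_offset) simp
  also have "\<dots> = (\<Sum>j. Kp J \<epsilon> (Suc j) z)" using z by simp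
  also have "\<dots> \<le> (\<Sum>j. ennreal (?c / 2 * (1/2) ^ j))"
  proof (intro suminf_le allI)
    fix j
    have "Kp J \<epsilon> (Suc j) z \<le> ennreal (Jc * real (Suc j) * (2 powr \<alpha> * \<epsilon>) ^ Suc j * br z powr (-\<alpha>))"
      by (rule Kp_bound[OF J0 Js e al Jc A1])
    also have "\<dots> \<le> ennreal (?c / 2 * (1/2) ^ j)"
    proof (intro ennreal_leI)
      have "real (Suc j) * (2 powr \<alpha> * \<epsilon>) ^ Suc j \<le> (1/2) ^ Suc j"
        by (rule mq_bound) (use e q in auto)
      then have "Jc * (real (Suc j) * (2 powr \<alpha> * \<epsilon>) ^ Suc j) * br z powr (-\<alpha>)
          \<le> Jc * (1/2) ^ Suc j * br z powr (-\<alpha>)"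
        using Jc by (intro mult_right_mono mult_left_mono) auto
      then show "Jc * real (Suc j) * (2 powr \<alpha> * \<epsilon>) ^ Suc j * br z powr (-\<alpha>) \<le> ?c / 2 * (1/2) ^ j"
        by (simp add: mult_ac)
    qed
    finally show "Kp J \<epsilon> (Suc j) z \<le> ennreal (?c / 2 * (1/2) ^ j)" .
  qed auto
  also have "\<dots> = ennreal (\<Sum>j. ?c / 2 * (1/2) ^ j)"
    using c0 by (intro suminf_ennreal2 summable_mult summable_geometric) auto
  also have "(\<Sum>j. ?c / 2 * (1/2) ^ j) = ?c"
    using sums_mult[OF geometric_sums[of "1/2::real"], of "?c / 2"] by (simp add: sums_iff)
  finally show ?thesis .
qed



lemma tele:
  fixes t \<alpha> :: real
  assumes t: "t \<ge> 1" and al: "\<alpha> > 1"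
  shows "(\<alpha> - 1) * (t + 1) powr (-\<alpha>) \<le> t powr (1 - \<alpha>) - (t + 1) powr (1 - \<alpha>)"
proof -
  have "\<exists>z. t < z \<and> z < t + 1 \<and>
      (t + 1) powr (1 - \<alpha>) - t powr (1 - \<alpha>) = (t + 1 - t) * ((1 - \<alpha>) * z powr (1 - \<alpha> - 1))"
  proof (rule MVT2)
    fix y assume "t \<le> y" "y \<le> t + 1"
    then show "((\<lambda>z. z powr (1 - \<alpha>)) has_real_derivative (1 - \<alpha>) * y powr (1 - \<alpha> - 1)) (at y)"
      using t by (intro has_real_derivative_powr) auto
  qed auto
  then obtain z where z: "t < z" "z < t + 1"
    and eq: "(t + 1) powr (1 - \<alpha>) - t powr (1 - \<alpha>) = (1 - \<alpha>) * z powr (- \<alpha>)" by auto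
  have "(t + 1) powr (-\<alpha>) \<le> z powr (-\<alpha>)"
    using z t al by (intro powr_mono2') auto
  then have "(\<alpha> - 1) * (t + 1) powr (-\<alpha>) \<le> (\<alpha> - 1) * z powr (-\<alpha>)"
    using al by (intro mult_left_mono) auto
  also have "\<dots> = t powr (1 - \<alpha>) - (t + 1) powr (1 - \<alpha>)" using eq by (simp add: algebra_simps)
  finally show ?thesis .
qed

lemma partial_bound:
  fixes d \<alpha> :: real
  assumes d: "d \<ge> 1" and al: "\<alpha> > 1"
  shows "(\<Sum>n<Suc N. (d + real n) powr (-\<alpha>)) \<le> d powr (-\<alpha>) + (d powr (1 - \<alpha>) - (d + real N) powr (1 - \<alpha>)) / (\<alpha> - 1)"
proof (induction N)
  case 0 then show ?case by simp
next
  case (Suc N)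
  let ?F = "\<lambda>n::nat. (d + real n) powr (1 - \<alpha>)"
  have t: "(d + real (Suc N)) powr (-\<alpha>) \<le> (?F N - ?F (Suc N)) / (\<alpha> - 1)"
  proof -
    have "(\<alpha> - 1) * (d + real N + 1) powr (-\<alpha>) \<le> (d + real N) powr (1 - \<alpha>) - (d + real N + 1) powr (1 - \<alpha>)"
      using tele[of "d + real N" \<alpha>] d al by simp
    then show ?thesis using al by (simp add: field_simps add.assoc)
  qed
  have fr: "(A - B) / c + (B - C) / c = (A - C) / c" for A B C c :: real
    by (simp add: diff_divide_distrib)
  have "(\<Sum>n<Suc (Suc N). (d + real n) powr (-\<alpha>)) = (\<Sum>n<Suc N. (d + real n) powr (-\<alpha>)) + (d + real (Suc N)) powr (-\<alpha>)"
    by (rule sum.lessThan_Suc)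
  also have "\<dots> \<le> d powr (-\<alpha>) + (d powr (1 - \<alpha>) - ?F N) / (\<alpha> - 1) + (?F N - ?F (Suc N)) / (\<alpha> - 1)"
    using Suc.IH t by linarith
  also have "\<dots> = d powr (-\<alpha>) + (d powr (1 - \<alpha>) - ?F (Suc N)) / (\<alpha> - 1)"
    using fr[of "d powr (1 - \<alpha>)" "?F N" "\<alpha> - 1" "?F (Suc N)"] by simp
  finally show ?case .
qed

lemma nat_sum_bound:
  fixes d \<alpha> :: real
  assumes d: "d \<ge> 1" and al: "\<alpha> \<ge> 2"
  shows "(\<Sum>n. ennreal ((d + real n) powr (-\<alpha>))) \<le> ennreal (2 * d powr (1 - \<alpha>))"
proof -
  have ps: "(\<Sum>n<N. (d + real n) powr (-\<alpha>)) \<le> 2 * d powr (1 - \<alpha>)" for N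
  proof -
    have "(\<Sum>n<N. (d + real n) powr (-\<alpha>)) \<le> (\<Sum>n<Suc N. (d + real n) powr (-\<alpha>))"
      by (simp add: sum_nonneg)
    also have "\<dots> \<le> d powr (-\<alpha>) + (d powr (1 - \<alpha>) - (d + real N) powr (1 - \<alpha>)) / (\<alpha> - 1)"
      by (rule partial_bound) (use d al in auto)
    also have "\<dots> \<le> d powr (1 - \<alpha>) + d powr (1 - \<alpha>)"
    proof (rule add_mono)
      show "d powr (-\<alpha>) \<le> d powr (1 - \<alpha>)" using d by (intro powr_mono) auto
      have "(d powr (1 - \<alpha>) - (d + real N) powr (1 - \<alpha>)) / (\<alpha> - 1) \<le> d powr (1 - \<alpha>) / (\<alpha> - 1)"
        using al by (intro divide_right_mono) auto
      also have "\<dots> \<le> d powr (1 - \<alpha>) / 1"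
        using al d by (intro divide_left_mono) auto
      finally show "(d powr (1 - \<alpha>) - (d + real N) powr (1 - \<alpha>)) / (\<alpha> - 1) \<le> d powr (1 - \<alpha>)" by simp
    qed
    finally show ?thesis by simp
  qed
  have s: "summable (\<lambda>n. (d + real n) powr (-\<alpha>))"
    by (rule summableI_nonneg_bounded[OF _ ps]) simp
  have "(\<Sum>n. ennreal ((d + real n) powr (-\<alpha>))) = ennreal (\<Sum>n. (d + real n) powr (-\<alpha>))"
    by (rule suminf_ennreal2[OF _ s]) simp
  also have "\<dots> \<le> ennreal (2 * d powr (1 - \<alpha>))"
    by (intro ennreal_leI suminf_le_const[OF s ps])
  finally show ?thesis .
qed

lemma int_sum_bound:
  fixes d \<alpha> :: real
  assumes d: "d \<ge> 1" and al: "\<alpha> \<ge> 2"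
  shows "isum (\<lambda>t::int. ennreal ((d + real_of_int \<bar>t\<bar>) powr (-\<alpha>))) \<le> ennreal (4 * d powr (1 - \<alpha>))"
proof -
  let ?h = "\<lambda>t::int. ennreal ((d + real_of_int \<bar>t\<bar>) powr (-\<alpha>))"
  define f1 where "f1 t = (if t \<ge> 0 then ?h t else 0)" for t :: int
  have b: "bij_betw int UNIV {0::int..}"
    by (rule bij_betwI[where g=nat]) auto
  have "isum f1 = (\<integral>\<^sup>+t. ?h t \<partial>count_space {0::int..})"
    unfolding isum_def f1_def
    by (subst nn_integral_count_space_indicator) (auto intro!: nn_integral_cong split: split_indicator)
  also have "\<dots> = (\<integral>\<^sup>+n. ?h (int n) \<partial>count_space UNIV)"
    by (rule nn_integral_bij_count_space[OF b, symmetric])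
  also have "\<dots> = (\<Sum>n. ennreal ((d + real n) powr (-\<alpha>)))"
    by (simp add: nn_integral_count_space_nat)
  also have "\<dots> \<le> ennreal (2 * d powr (1 - \<alpha>))" by (rule nat_sum_bound[OF d al])
  finally have f1b: "isum f1 \<le> ennreal (2 * d powr (1 - \<alpha>))" .
  have r: "isum (\<lambda>t. f1 (- t)) = isum f1" using isum_refl[of f1 0] by simp
  have "isum ?h \<le> isum (\<lambda>t. f1 t + f1 (- t))"
    by (intro isum_mono) (auto simp: f1_def)
  also have "\<dots> = isum f1 + isum f1" by (simp add: isum_add r)
  also have "\<dots> \<le> ennreal (2 * d powr (1 - \<alpha>)) + ennreal (2 * d powr (1 - \<alpha>))"
    by (intro add_mono f1b)
  also have "\<dots> = ennreal (4 * d powr (1 - \<alpha>))" by (simp add: ennreal_plus[symmetric] del: ennreal_plus)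
  finally show ?thesis .
qed

lemma line_sum_fst:
  fixes g :: "int \<Rightarrow> ennreal"
  shows "isum (\<lambda>v::int \<times> int. if fst v = c then g (snd v) else 0) = isum g"
proof -
  have "isum (\<lambda>v::int \<times> int. if fst v = c then g (snd v) else 0)
      = isum (\<lambda>a. isum (\<lambda>b. if a = c then g b else 0))" by (subst isum_pair) (simp cong: if_cong)
  also have "\<dots> = isum (\<lambda>b. if c = c then g b else 0)" by (rule isum_single[where j=c]) (simp add: isum_def)
  finally show ?thesis by simp
qed

lemma line_sum_snd:
  fixes g :: "int \<Rightarrow> ennreal"
  shows "isum (\<lambda>v::int \<times> int. if snd v = c then g (fst v) else 0) = isum g"
proof -
  have "isum (\<lambda>v::int \<times> int. if snd v = c then g (fst v) else 0)
      = isum (\<lambda>a. isum (\<lambda>b. if b = c then g a else 0))" by (subst isum_pair) (simp cong: if_cong)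
  also have "\<dots> = isum g"
    by (rule arg_cong[where f=isum], rule ext, subst isum_single[where j=c]) auto
  finally show ?thesis .
qed



lemma count_space_ge:
  assumes "j \<in> I" shows "f j \<le> (\<integral>\<^sup>+i. f i \<partial>count_space I)"
proof -
  have "f j = f j * indicator I j" using assms by simp
  also have "\<dots> \<le> isum (\<lambda>i. f i * indicator I i)" by (rule isum_ge)
  also have "\<dots> = (\<integral>\<^sup>+i. f i \<partial>count_space I)"
    unfolding isum_def by (simp add: nn_integral_count_space_indicator)
  finally show ?thesis .
qed

lemma emeasure_UN_le:
  assumes X: "\<And>i. i \<in> I \<Longrightarrow> X i \<in> sets M" and I: "countable I"
  shows "emeasure M (\<Union>(X ` I)) \<le> (\<integral>\<^sup>+i. emeasure M (X i) \<partial>count_space I)"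
proof -
  have U: "\<Union>(X ` I) \<in> sets M" using X I by (intro sets.countable_UN') auto
  have "emeasure M (\<Union>(X ` I)) = (\<integral>\<^sup>+x. indicator (\<Union>(X ` I)) x \<partial>M)"
    using U by simp
  also have "\<dots> \<le> (\<integral>\<^sup>+x. \<integral>\<^sup>+i. indicator (X i) x \<partial>count_space I \<partial>M)"
  proof (intro nn_integral_mono)
    fix x
    show "indicator (\<Union>(X ` I)) x \<le> (\<integral>\<^sup>+i. indicator (X i) x \<partial>count_space I)"
    proof (cases "x \<in> \<Union>(X ` I)")
      case True
      then obtain j where j: "j \<in> I" "x \<in> X j" by auto
      have "indicator (\<Union>(X ` I)) x = (indicator (X j) x :: ennreal)" using True j by simp
      also have "\<dots> \<le> (\<integral>\<^sup>+i. indicator (X i) x \<partial>count_space I)"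
        by (rule count_space_ge[OF j(1), of "\<lambda>i. indicator (X i) x"])
      finally show ?thesis .
    qed simp
  qed
  also have "\<dots> = (\<integral>\<^sup>+i. \<integral>\<^sup>+x. indicator (X i) x \<partial>M \<partial>count_space I)"
    using X by (intro nn_integral_count_space_nn_integral I) auto
  also have "\<dots> = (\<integral>\<^sup>+i. emeasure M (X i) \<partial>count_space I)"
    using X by (intro nn_integral_cong) auto
  finally show ?thesis .
qed

lemma Sup_enat_in:
  fixes S :: "enat set"
  assumes "S \<noteq> {}" "Sup S = enat m"
  shows "enat m \<in> S"
proof (cases "finite S")
  case True
  then have "Sup S = Max S" using assms(1) by (simp add: Sup_enat_def)
  then show ?thesis using Max_in[OF True assms(1)] assms(2) by simp
next
  case False
  then have "Sup S = \<infinity>" using assms(1) by (simp add: Sup_enat_def)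
  then show ?thesis using assms(2) by simp
qed

lemma linf_abs: "\<bar>fst x\<bar> \<le> linf x" "\<bar>snd x\<bar> \<le> linf x"
  unfolding linf_def by auto

lemma sum4_le:
  fixes a b c d :: ennreal
  shows "a \<le> a + b + c + d" "b \<le> a + b + c + d" "c \<le> a + b + c + d" "d \<le> a + b + c + d"
proof -
  have "a \<le> a + (b + c + d)" by (rule add_increasing2) auto
  then show "a \<le> a + b + c + d" by (simp add: add.assoc)
  have "b \<le> b + (a + c + d)" by (rule add_increasing2) auto
  then show "b \<le> a + b + c + d" by (simp add: ac_simps)
  have "c \<le> c + (a + b + d)" by (rule add_increasing2) auto
  then show "c \<le> a + b + c + d" by (simp add: ac_simps)
  have "d \<le> d + (a + b + c)" by (rule add_increasing2) auto
  then show "d \<le> a + b + c + d" by (simp add: ac_simps)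
qed

lemma br_ge_l1: "real_of_int (l1 z) \<le> br z" unfolding br_def by simp

lemma boundary_sum:
  fixes x :: "int \<times> int" and k :: int and \<alpha> :: real
  assumes k: "linf x < k" and al: "\<alpha> \<ge> 2"
  shows "isum (\<lambda>v. if linf v = k then ennreal (br (x - v) powr (-\<alpha>)) else 0)
     \<le> ennreal (16 * real_of_int (k - linf x) powr (1 - \<alpha>))"
proof -
  define d where "d = real_of_int (k - linf x)"
  have d1: "d \<ge> 1" using k by (simp add: d_def)
  define h where "h t = ennreal ((d + real_of_int \<bar>t\<bar>) powr (-\<alpha>))" for t :: int
  have hs: "isum h \<le> ennreal (4 * d powr (1 - \<alpha>))"
    unfolding h_def by (rule int_sum_bound[OF d1 al])
  have key: "br (x - v) powr (-\<alpha>) \<le> (d + real_of_int \<bar>t\<bar>) powr (-\<alpha>)"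
    if "real_of_int (k - linf x) + real_of_int \<bar>t\<bar> \<le> real_of_int (l1 (x - v))" for v t
  proof -
    have "d + real_of_int \<bar>t\<bar> \<le> br (x - v)" using that br_ge_l1[of "x - v"] by (simp add: d_def)
    then show ?thesis using d1 al by (intro powr_mono2') auto
  qed
  have k0: "k \<ge> 0" using k linf_abs(1)[of x] by simp
  define G1 where "G1 v = (if fst v = k then h (snd v - snd x) else 0)" for v :: "int \<times> int"
  define G2 where "G2 v = (if fst v = -k then h (snd v - snd x) else 0)" for v :: "int \<times> int"
  define G3 where "G3 v = (if snd v = k then h (fst v - fst x) else 0)" for v :: "int \<times> int"
  define G4 where "G4 v = (if snd v = -k then h (fst v - fst x) else 0)" for v :: "int \<times> int"
  have pt: "(if linf v = k then ennreal (br (x - v) powr (-\<alpha>)) else 0) \<le> G1 v + G2 v + G3 v + G4 v" for v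
  proof (cases "linf v = k")
    case True
    obtain v1 v2 where v: "v = (v1, v2)" by (cases v)
    obtain x1 x2 where x: "x = (x1, x2)" by (cases x)
    have ax: "\<bar>x1\<bar> \<le> linf x" "\<bar>x2\<bar> \<le> linf x" using linf_abs[of x] x by auto
    have l1e: "l1 (x - v) = \<bar>x1 - v1\<bar> + \<bar>x2 - v2\<bar>" using v x by (simp add: l1_def)
    have "v1 = k \<or> v1 = -k \<or> v2 = k \<or> v2 = -k" using True v by (auto simp: linf_def max_def split: if_splits)
    then show ?thesis
    proof (elim disjE)
      assume a: "v1 = k"
      have "ennreal (br (x - v) powr (-\<alpha>)) \<le> G1 v"
        using a key[of "v2 - x2" v] ax l1e v x by (auto simp: G1_def h_def intro!: ennreal_leI)
      then show ?thesis using True order_trans[OF _ sum4_le(1)] by simp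
    next
      assume a: "v1 = -k"
      have "ennreal (br (x - v) powr (-\<alpha>)) \<le> G2 v"
        using a key[of "v2 - x2" v] ax l1e v x by (auto simp: G2_def h_def intro!: ennreal_leI)
      then show ?thesis using True
        using True order_trans[OF _ sum4_le(2)] by simp
    next
      assume a: "v2 = k"
      have "ennreal (br (x - v) powr (-\<alpha>)) \<le> G3 v"
        using a key[of "v1 - x1" v] ax l1e v x by (auto simp: G3_def h_def intro!: ennreal_leI)
      then show ?thesis using True
        using True order_trans[OF _ sum4_le(3)] by simp
    next
      assume a: "v2 = -k"
      have "ennreal (br (x - v) powr (-\<alpha>)) \<le> G4 v"
        using a key[of "v1 - x1" v] ax l1e v x by (auto simp: G4_def h_def intro!: ennreal_leI)
      then show ?thesis using True
        using True order_trans[OF _ sum4_le(4)] by simp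
    qed
  qed simp
  have sh: "isum (\<lambda>t. h (t - c)) = isum h" for c
    using isum_shift[of h "-c"] by simp
  have s1: "isum G1 = isum h" unfolding G1_def using line_sum_fst[of k "\<lambda>t. h (t - snd x)"] sh by simp
  have s2: "isum G2 = isum h" unfolding G2_def using line_sum_fst[of "-k" "\<lambda>t. h (t - snd x)"] sh by simp
  have s3: "isum G3 = isum h" unfolding G3_def using line_sum_snd[of k "\<lambda>t. h (t - fst x)"] sh by simp
  have s4: "isum G4 = isum h" unfolding G4_def using line_sum_snd[of "-k" "\<lambda>t. h (t - fst x)"] sh by simp
  have "isum (\<lambda>v. if linf v = k then ennreal (br (x - v) powr (-\<alpha>)) else 0)
      \<le> isum (\<lambda>v. G1 v + G2 v + G3 v + G4 v)" by (intro isum_mono pt)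
  also have "\<dots> = isum h + isum h + isum h + isum h" by (simp add: isum_add s1 s2 s3 s4)
  also have "\<dots> \<le> ennreal (4 * d powr (1 - \<alpha>)) + ennreal (4 * d powr (1 - \<alpha>)) +
      ennreal (4 * d powr (1 - \<alpha>)) + ennreal (4 * d powr (1 - \<alpha>))"
    by (intro add_mono hs)
  also have "\<dots> = ennreal (16 * d powr (1 - \<alpha>))"
    by (simp add: ennreal_plus[symmetric] del: ennreal_plus)
  finally show ?thesis by (simp add: d_def)
qed



theorem propositionA2:
  fixes J :: "int \<times> int \<Rightarrow> real" and \<alpha> Jc :: real
  assumes J_sym: "\<And>x. J x = J (- x)"
    and J_nonneg: "\<And>x. J x \<ge> 0"
    and J_sum: "(J has_sum 1) UNIV"
    and alpha: "\<alpha> > 4"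
    and Jc: "Jc \<ge> 0"
    and A1: "\<And>x. x \<noteq> 0 \<Longrightarrow> J x \<le> Jc * real_of_int (l1 x) powr (- \<alpha>)"
  shows "\<exists>\<epsilon>0>0. \<forall>\<epsilon>. 0 < \<epsilon> \<and> \<epsilon> \<le> 1 \<and> \<epsilon> \<le> \<epsilon>0 \<longrightarrow>
           (\<exists>C1. \<forall>x :: int \<times> int. \<forall>k :: int. k > linf x \<longrightarrow>
              measure (perc J \<epsilon>) {A \<in> space (perc J \<epsilon>). mA A x = enat (nat k)}
                \<le> C1 / real_of_int (k - linf x) powr (\<alpha> - 1))"
proof (rule exI[of _ "1 / (4 * 2 powr \<alpha>)"], rule conjI)
  show "0 < 1 / (4 * 2 powr \<alpha>)" by simp
  show "\<forall>\<epsilon>. 0 < \<epsilon> \<and> \<epsilon> \<le> 1 \<and> \<epsilon> \<le> 1 / (4 * 2 powr \<alpha>) \<longrightarrow>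
           (\<exists>C1. \<forall>x :: int \<times> int. \<forall>k :: int. k > linf x \<longrightarrow>
              measure (perc J \<epsilon>) {A \<in> space (perc J \<epsilon>). mA A x = enat (nat k)}
                \<le> C1 / real_of_int (k - linf x) powr (\<alpha> - 1))"
  proof (intro allI impI)
  fix \<epsilon> :: real
  assume "0 < \<epsilon> \<and> \<epsilon> \<le> 1 \<and> \<epsilon> \<le> 1 / (4 * 2 powr \<alpha>)"
  then have e0: "0 < \<epsilon>" and e1: "\<epsilon> \<le> 1" and e2: "\<epsilon> \<le> 1 / (4 * 2 powr \<alpha>)" by auto
  have q: "2 powr \<alpha> * \<epsilon> \<le> 1/4"
  proof -
    have "2 powr \<alpha> * \<epsilon> \<le> 2 powr \<alpha> * (1 / (4 * 2 powr \<alpha>))" using e2 by (intro mult_left_mono) auto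
    then show ?thesis by simp
  qed
  have al0: "\<alpha> \<ge> 0" "\<alpha> \<ge> 2" using alpha by auto
  show "\<exists>C1. \<forall>x :: int \<times> int. \<forall>k :: int. k > linf x \<longrightarrow>
              measure (perc J \<epsilon>) {A \<in> space (perc J \<epsilon>). mA A x = enat (nat k)}
                \<le> C1 / real_of_int (k - linf x) powr (\<alpha> - 1)"
  proof (intro exI[of _ "16 * Jc"] allI impI)
    fix x :: "int \<times> int" and k :: int
    assume k: "linf x < k"
    let ?M = "perc J \<epsilon>"
    let ?E = "{A \<in> space ?M. mA A x = enat (nat k)}"
    define I where "I = {p :: (int \<times> int) \<times> (int \<times> int) list.
        linf (fst p) = k \<and> distinct (fst p # snd p) \<and> last (fst p # snd p) = x}"
    define U where "U = (\<Union>p\<in>I. Op J \<epsilon> (fst p) (snd p))"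
    have cI: "countable I" by (rule countableI_type)
    have Us: "\<And>p. p \<in> I \<Longrightarrow> Op J \<epsilon> (fst p) (snd p) \<in> sets ?M"
      unfolding I_def by (rule Op_sets) auto
    have U: "U \<in> sets ?M" unfolding U_def using Us cI by (intro sets.countable_UN') auto
    have k0: "linf x \<ge> 0" unfolding linf_def by simp
    have EU: "?E \<subseteq> U"
    proof
      fix A assume A: "A \<in> ?E"
      let ?S = "(\<lambda>v. enat (nat (linf v))) ` {v. connected_in A v x}"
      have "connected_in A x x" by (simp add: connected_in_def)
      then have "?S \<noteq> {}" by blast
      moreover have "Sup ?S = enat (nat k)" using A by (simp add: mA_def)
      ultimately have "enat (nat k) \<in> ?S" by (rule Sup_enat_in)
      then obtain v where v: "connected_in A v x" "nat (linf v) = nat k" by auto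
      have "linf v \<ge> 0" unfolding linf_def by simp
      then have lv: "linf v = k" using v(2) k k0 by simp
      obtain xs where xs: "distinct (v # xs)" "last (v # xs) = x" "\<forall>e\<in>Es v xs. A e"
        using conn_path[OF v(1)] by blast
      have "A \<in> Op J \<epsilon> v xs" using A xs(3) by (intro Op_mem) auto
      moreover have "(v, xs) \<in> I" using lv xs(1,2) unfolding I_def by (auto split: if_splits)
      ultimately show "A \<in> U" unfolding U_def by force
    qed
    have "emeasure ?M ?E \<le> emeasure ?M U" by (rule emeasure_mono[OF EU U])
    also have "\<dots> \<le> (\<integral>\<^sup>+p. emeasure ?M (Op J \<epsilon> (fst p) (snd p)) \<partial>count_space I)"
      unfolding U_def by (rule emeasure_UN_le[OF Us cI])
    also have "\<dots> = (\<integral>\<^sup>+p. Wt J \<epsilon> (fst p) (snd p) \<partial>count_space I)"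
      by (intro nn_integral_cong Op_emeasure J_sym J_nonneg J_sum e1) (use e0 in \<open>auto simp: I_def\<close>)
    also have "\<dots> = isum (\<lambda>p. Wt J \<epsilon> (fst p) (snd p) * indicator I p)"
      unfolding isum_def by (simp add: nn_integral_count_space_indicator)
    also have "\<dots> \<le> isum (\<lambda>p. if linf (fst p) = k then
        (if last (fst p # snd p) = x then Wt J \<epsilon> (fst p) (snd p) else 0) else 0)"
      by (intro isum_mono) (auto simp: I_def split: split_indicator)
    also have "\<dots> = isum (\<lambda>v. if linf v = k then
        isum (\<lambda>xs. if last (v # xs) = x then Wt J \<epsilon> v xs else 0) else 0)"
      by (subst isum_pair) (rule arg_cong[where f=isum], rule ext, simp add: isum_def cong: if_cong)
    also have "\<dots> = isum (\<lambda>v. if linf v = k then (\<Sum>n. Kp J \<epsilon> n (x - v)) else 0)"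
      by (rule arg_cong[where f=isum], rule ext, simp only: walks_sum)
    also have "\<dots> \<le> isum (\<lambda>v. if linf v = k then ennreal (Jc * br (x - v) powr (-\<alpha>)) else 0)"
    proof (intro isum_mono)
      fix v
      show "(if linf v = k then (\<Sum>n. Kp J \<epsilon> n (x - v)) else 0)
          \<le> (if linf v = k then ennreal (Jc * br (x - v) powr (-\<alpha>)) else 0)"
      proof (cases "linf v = k")
        case True
        then have "x - v \<noteq> 0" using k by auto
        then show ?thesis using True
          by (simp add: Kp_sum_bound[OF J_nonneg J_sum _ q al0(1) Jc A1] e0 less_imp_le)
      qed simp
    qed
    also have "\<dots> = ennreal Jc * isum (\<lambda>v. if linf v = k then ennreal (br (x - v) powr (-\<alpha>)) else 0)"
      by (subst isum_cmult[symmetric]) (rule arg_cong[where f=isum], auto simp: ennreal_mult Jc)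
    also have "\<dots> \<le> ennreal Jc * ennreal (16 * real_of_int (k - linf x) powr (1 - \<alpha>))"
      by (intro mult_left_mono boundary_sum k al0) auto
    also have "\<dots> = ennreal (16 * Jc / real_of_int (k - linf x) powr (\<alpha> - 1))"
    proof -
      have "real_of_int (k - linf x) powr (1 - \<alpha>) = 1 / real_of_int (k - linf x) powr (\<alpha> - 1)"
        using k by (simp add: powr_minus_divide[symmetric] powr_minus)
      then show ?thesis using Jc by (simp add: ennreal_mult[symmetric])
    qed
    finally have le: "emeasure ?M ?E \<le> ennreal (16 * Jc / real_of_int (k - linf x) powr (\<alpha> - 1))" .
    show "measure ?M ?E \<le> 16 * Jc / real_of_int (k - linf x) powr (\<alpha> - 1)"
      unfolding measure_def using le Jc by (intro enn2real_leI) auto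
  qed
  qed
qed


end
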